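(* Let $f(x,y,z)=5x^2+7y^2+70z^2$. (i) If $n\in\mathbb{N}$ satisfies $n\equiv 1\pmod 4$, or $n\equiv 2\pmod 4$, or $n\equiv 4\pmod 8$, then $70n-2$ is represented by $f$ locally. (ii) If $n\in\mathbb{N}$ satisfies $n\equiv 3\pmod 4$ or $n\equiv 8\pmod{16}$, then $70n-32$ is represented by $f$ locally.
   Context: An integer $m$ is represented by $f$ locally if there exist $x,y,z\in\mathbb{R}$ with $f(x,y,z)=m$ and, for every prime $p$, there exist $x,y,z\in\mathbb{Z}_p$ (the $p$-adic integers) with $f(x,y,z)=m$. *)

theory Defs
  imports Complex_Main "HOL-Number_Theory.Cong"
begin

definition ff :: "'a::comm_ring_1 \<Rightarrow> 'a \<Rightarrow> 'a \<Rightarrow> 'a" where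
  "ff x y z = 5 * x^2 + 7 * y^2 + 70 * z^2"

text \<open>p-adic integers as the inverse limit of Z/p^k Z: a p-adic integer is a coherent
  sequence of residues a k in {0..p^k-1} with a (k+1) = a k mod p^k.\<close>
definition padic_int :: "nat \<Rightarrow> (nat \<Rightarrow> int) \<Rightarrow> bool" where
  "padic_int p a \<longleftrightarrow>
     (\<forall>k. 0 \<le> a k \<and> a k < int p ^ k \<and> [a (Suc k) = a k] (mod int p ^ k))"

definition padic_rep :: "nat \<Rightarrow> int \<Rightarrow> bool" where
  "padic_rep p m \<longleftrightarrow>
     (\<exists>x y z. padic_int p x \<and> padic_int p y \<and> padic_int p z \<and>
        (\<forall>k. [ff (x k) (y k) (z k) = m] (mod int p ^ k)))"

definition locally_represented :: "int \<Rightarrow> bool" where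
  "locally_represented m \<longleftrightarrow>
     (\<exists>x y z :: real. ff x y z = of_int m) \<and>
     (\<forall>p::nat. prime p \<longrightarrow> padic_rep p m)"

end

theory Submission
  imports Defs
begin


lemma dep_choice:
  assumes "P 0 z" "\<And>k t. P k t \<Longrightarrow> \<exists>t'. P (Suc k) t' \<and> R k t t'"
  shows "\<exists>s. \<forall>k. P k (s k) \<and> R k (s k) (s (Suc k))"
proof -
  define s where "s = rec_nat z (\<lambda>k t. SOME t'. P (Suc k) t' \<and> R k t t')"
  have s0: "s 0 = z" and sS: "\<And>k. s (Suc k) = (SOME t'. P (Suc k) t' \<and> R k (s k) t')"
    by (simp_all add: s_def)
  have P: "P k (s k)" for k
  proof (induction k)
    case 0
    show ?case using assms(1) s0 by simp
  next
    case (Suc k)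
    from someI_ex[OF assms(2)[OF this]] show ?case unfolding sS[of k] by simp
  qed
  have "R k (s k) (s (Suc k))" for k
    using someI_ex[OF assms(2)[OF P[of k]]] unfolding sS[of k] by simp
  then have "P k (s k) \<and> R k (s k) (s (Suc k))" for k using P by blast
  then show ?thesis by blast
qed

lemma padic_from:
  fixes s t u :: "nat \<Rightarrow> int"
  assumes p: "p > 0"
    and cs: "\<And>k. int p ^ k dvd s (Suc k) - s k"
    and ct: "\<And>k. int p ^ k dvd t (Suc k) - t k"
    and cu: "\<And>k. int p ^ k dvd u (Suc k) - u k"
    and eq: "\<And>k. int p ^ k dvd ff (s k) (t k) (u k) - m"
  shows "padic_rep p m"
proof -
  have pi: "padic_int p (\<lambda>k. s k mod int p ^ k)" if c: "\<And>k. int p ^ k dvd s (Suc k) - s k" for s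
    unfolding padic_int_def
  proof (intro allI conjI)
    fix k
    show "0 \<le> s k mod int p ^ k" using p by simp
    show "s k mod int p ^ k < int p ^ k" using p by simp
    have d: "int p ^ k dvd int p ^ Suc k" by simp
    have "[s (Suc k) mod int p ^ Suc k = s (Suc k)] (mod int p ^ k)"
      using cong_dvd_modulus[OF _ d] by (metis cong_mod_left cong_refl)
    moreover have "[s (Suc k) = s k] (mod int p ^ k)" using c[of k] by (simp add: cong_iff_dvd_diff)
    moreover have "[s k = s k mod int p ^ k] (mod int p ^ k)" by (simp add: cong_sym)
    ultimately show "[s (Suc k) mod int p ^ Suc k = s k mod int p ^ k] (mod int p ^ k)"
      using cong_trans by blast
  qed
  have "[ff (s k mod int p ^ k) (t k mod int p ^ k) (u k mod int p ^ k) = m] (mod int p ^ k)" for k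
  proof -
    have "[ff (s k mod int p ^ k) (t k mod int p ^ k) (u k mod int p ^ k) = ff (s k) (t k) (u k)] (mod int p ^ k)"
      unfolding ff_def by (intro cong_add cong_mult cong_pow cong_refl) simp_all
    moreover have "[ff (s k) (t k) (u k) = m] (mod int p ^ k)" using eq[of k] by (simp add: cong_iff_dvd_diff)
    ultimately show ?thesis using cong_trans by blast
  qed
  then show ?thesis unfolding padic_rep_def using pi[OF cs] pi[OF ct] pi[OF cu] by blast
qed

lemma hensel_odd_step:
  fixes q a b t :: int
  assumes q: "prime q" "\<not> q dvd 2" "\<not> q dvd a" "\<not> q dvd t" and K: "K \<ge> 1"
    and h: "q ^ K dvd a * t^2 - b"
  shows "\<exists>t'. q ^ Suc K dvd a * t'^2 - b \<and> \<not> q dvd t' \<and> q ^ K dvd t' - t"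
proof -
  obtain w where w: "a * t^2 - b = q^K * w" using h by blast
  have "\<not> q dvd 2 * a * t" using q by (simp add: prime_dvd_mult_iff)
  then have "coprime q (2*a*t)" using q(1) by (intro prime_imp_coprime) auto
  then have "coprime (2*a*t) q" by (simp add: coprime_commute)
  then obtain v where v: "[2*a*t*v = 1] (mod q)" using cong_solve_coprime_int by blast
  define u where "u = - w * v"
  define t' where "t' = t + q^K * u"
  have e: "a*t'^2 - b = q^K*(w + 2*a*t*u) + a*(q^K)^2*u^2"
    using w by (simp add: t'_def power2_eq_square algebra_simps)
  have "[w + 2*a*t*u = w - w * (2*a*t*v)] (mod q)" by (simp add: u_def algebra_simps)
  moreover have "[w - w * (2*a*t*v) = w - w*1] (mod q)" using v by (intro cong_diff cong_mult cong_refl)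
  ultimately have "[w + 2*a*t*u = 0] (mod q)" using cong_trans by fastforce
  then have d1: "q dvd w + 2*a*t*u" by (simp add: cong_0_iff)
  have d2: "q ^ Suc K dvd q^K*(w + 2*a*t*u)" using d1 by simp
  have "q ^ Suc K dvd (q^K)^2"
    using K by (metis le_imp_power_dvd power2_eq_square power_add Suc_le_mono add_le_mono1 plus_1_eq_Suc le_refl mult_2 power_even_eq)
  then have d3: "q ^ Suc K dvd a*(q^K)^2*u^2" by (simp add: dvd_mult)
  have "q ^ Suc K dvd a*t'^2 - b" unfolding e using d2 d3 by simp
  moreover have "q ^ K dvd t' - t" by (simp add: t'_def)
  moreover have "\<not> q dvd t'"
  proof
    assume "q dvd t'"
    moreover have "q dvd q^K * u" using K by (simp add: dvd_mult2 dvd_power)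
    ultimately have "q dvd t' - q^K*u" by simp
    then show False using q by (simp add: t'_def)
  qed
  ultimately show ?thesis by blast
qed

lemma hensel_odd:
  fixes q a b z :: int
  assumes q: "prime q" "\<not> q dvd 2" "\<not> q dvd a" "\<not> q dvd z"
    and h: "q dvd a * z^2 - b"
  shows "\<exists>s. \<forall>k. q ^ Suc k dvd a * (s k)^2 - b \<and> q ^ Suc k dvd s (Suc k) - s k"
proof -
  have "\<exists>s. \<forall>k. (q ^ Suc k dvd a * (s k)^2 - b \<and> \<not> q dvd s k) \<and> q ^ Suc k dvd s (Suc k) - s k"
    apply (rule dep_choice[where P="\<lambda>k t. q ^ Suc k dvd a * t^2 - b \<and> \<not> q dvd t"
          and R="\<lambda>k t t'. q ^ Suc k dvd t' - t"])
    using h q apply simp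
    using hensel_odd_step[OF q(1-3), where K="Suc k" for k] by auto
  then show ?thesis by blast
qed

lemma hensel_two_step:
  fixes a b t :: int
  assumes a: "odd a" "odd t" and h: "2 ^ (j+3) dvd a * t^2 - b"
  shows "\<exists>t'. 2 ^ (Suc j + 3) dvd a * t'^2 - b \<and> odd t' \<and> 2 ^ (j+2) dvd t' - t"
proof -
  obtain w where w: "a * t^2 - b = 2^(j+3) * w" using h by blast
  show ?thesis
  proof (cases "even w")
    case True
    then obtain e where "w = 2*e" by blast
    then have "a * t^2 - b = 2^(Suc j + 3) * e" using w by (simp add: power_add)
    then have "2 ^ (Suc j + 3) dvd a * t^2 - b" by simp
    then show ?thesis using a by (intro exI[of _ t]) auto
  next
    case False
    define t' where "t' = t + 2^(j+2)"
    have e: "a*t'^2 - b = 2^(j+3)*(w + a*t) + 2^(j+4) * (2^j * a)"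
      using w by (simp add: t'_def power2_eq_square algebra_simps power_add)
    have "even (w + a*t)" using False a by simp
    then obtain c where "w + a*t = 2*c" by blast
    then have "2^(j+3)*(w + a*t) = 2^(Suc j + 3) * c" by (simp add: power_add)
    then have "2^(Suc j + 3) dvd 2^(j+3)*(w + a*t)" by simp
    moreover have "2^(Suc j + 3) dvd (2::int)^(j+4) * (2^j * a)" by (simp add: add.commute)
    ultimately have "2^(Suc j + 3) dvd a*t'^2 - b" unfolding e by (simp add: dvd_add)
    moreover have "odd t'" using a by (simp add: t'_def)
    moreover have "2 ^ (j+2) dvd t' - t" by (simp add: t'_def)
    ultimately show ?thesis by blast
  qed
qed

lemma hensel_two:
  fixes a b :: int
  assumes a: "odd a" and h: "8 dvd a - b"
  shows "\<exists>s. \<forall>k. 2 ^ (k+3) dvd a * (s k)^2 - b \<and> 2 ^ (k+2) dvd s (Suc k) - s k"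
proof -
  have "\<exists>s. \<forall>k. (2 ^ (k+3) dvd a * (s k)^2 - b \<and> odd (s k)) \<and> 2 ^ (k+2) dvd s (Suc k) - s k"
    apply (rule dep_choice[where P="\<lambda>k t. 2 ^ (k+3) dvd a * t^2 - b \<and> odd t" and z=1
          and R="\<lambda>k t t'. 2 ^ (k+2) dvd t' - t"])
    using h apply simp
    using hensel_two_step[OF a] by blast
  then show ?thesis by blast
qed



lemma sq_inj_aux:
  fixes q x y :: int
  assumes q: "prime q" and x: "0 \<le> x" "2*x < q" and y: "0 \<le> y" "2*y < q"
    and d: "q dvd x^2 - y^2"
  shows "x = y"
proof -
  have "x^2 - y^2 = (x-y)*(x+y)" by (simp add: power2_eq_square algebra_simps)
  then have "q dvd (x-y) \<or> q dvd (x+y)" using d q by (simp add: prime_dvd_mult_iff)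
  then show ?thesis
  proof
    assume h: "q dvd x - y"
    show ?thesis
    proof (rule ccontr)
      assume "x \<noteq> y"
      then have "\<bar>q\<bar> \<le> \<bar>x - y\<bar>" using dvd_imp_le_int h by simp
      then show False using x y by linarith
    qed
  next
    assume h: "q dvd x + y"
    show ?thesis
    proof (rule ccontr)
      assume "x \<noteq> y"
      then have "x + y \<noteq> 0" using x y by linarith
      then have "\<bar>q\<bar> \<le> \<bar>x + y\<bar>" using dvd_imp_le_int h by simp
      then show False using x y by linarith
    qed
  qed
qed

lemma two_squares_mod:
  fixes q a b c :: int
  assumes q: "prime q" "odd q" and a: "\<not> q dvd a" and b: "\<not> q dvd b"
  shows "\<exists>x y. q dvd a*x^2 + b*y^2 - c"
proof (rule ccontr)
  assume nex: "\<not> ?thesis"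
  define h where "h = (q - 1) div 2"
  have q2: "q = 2*h + 1" using q(2) by (simp add: h_def)
  have qpos: "q > 1" using q(1) prime_gt_1_int by blast
  define S where "S = {0..h}"
  have cS: "card S = nat (h+1)" by (simp add: S_def)
  have Sb: "\<And>x. x \<in> S \<Longrightarrow> 0 \<le> x \<and> 2*x < q" using q2 by (auto simp: S_def)
  define A where "A = (\<lambda>x. (a*x^2) mod q) ` S"
  define B where "B = (\<lambda>y. (c - b*y^2) mod q) ` S"
  have iA: "inj_on (\<lambda>x. (a*x^2) mod q) S"
  proof (rule inj_onI)
    fix x y assume xy: "x \<in> S" "y \<in> S" "(a*x^2) mod q = (a*y^2) mod q"
    then have "q dvd a*x^2 - a*y^2" by (simp add: mod_eq_dvd_iff)
    then have "q dvd a*(x^2 - y^2)" by (simp add: algebra_simps)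
    then have "q dvd x^2 - y^2" using a q(1) by (simp add: prime_dvd_mult_iff)
    then show "x = y" using sq_inj_aux[OF q(1)] Sb xy by blast
  qed
  have iB: "inj_on (\<lambda>y. (c - b*y^2) mod q) S"
  proof (rule inj_onI)
    fix x y assume xy: "x \<in> S" "y \<in> S" "(c - b*x^2) mod q = (c - b*y^2) mod q"
    then have "q dvd (c - b*x^2) - (c - b*y^2)" by (simp add: mod_eq_dvd_iff)
    then have "q dvd (-b)*(x^2 - y^2)" by (simp add: algebra_simps)
    then have "q dvd x^2 - y^2" using b q(1) by (simp add: prime_dvd_mult_iff)
    then show "x = y" using sq_inj_aux[OF q(1)] Sb xy by blast
  qed
  have cA: "card A = nat (h+1)" unfolding A_def using card_image[OF iA] cS by simp
  have cB: "card B = nat (h+1)" unfolding B_def using card_image[OF iB] cS by simp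
  have disj: "A \<inter> B = {}"
  proof (rule ccontr)
    assume "A \<inter> B \<noteq> {}"
    then obtain x y where "x \<in> S" "y \<in> S" "(a*x^2) mod q = (c - b*y^2) mod q"
      unfolding A_def B_def by auto
    then have "q dvd a*x^2 - (c - b*y^2)" by (simp add: mod_eq_dvd_iff)
    then have "q dvd a*x^2 + b*y^2 - c" by (simp add: algebra_simps)
    then show False using nex by blast
  qed
  have sub: "A \<union> B \<subseteq> {0..<q}" using qpos by (auto simp: A_def B_def)
  have fin: "finite A" "finite B" by (simp_all add: A_def B_def S_def)
  have "card (A \<union> B) = card A + card B" using card_Un_disjoint[OF fin disj] .
  moreover have "card (A \<union> B) \<le> card {0..<q}" using card_mono[OF _ sub] by simp
  ultimately have "nat (h+1) + nat (h+1) \<le> nat q" using cA cB by simp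
  then show False using q2 qpos by linarith
qed



lemma real_rep:
  assumes "m > 0" shows "\<exists>x y z :: real. ff x y z = of_int m"
proof -
  have "ff (sqrt (of_int m / 5)) 0 0 = (of_int m :: real)"
    using assms by (simp add: ff_def)
  then show ?thesis by blast
qed


lemma dvd_from_higher: "(q::int)^j dvd x \<Longrightarrow> k \<le> j \<Longrightarrow> q^k dvd x"
  using le_imp_power_dvd dvd_trans by blast

lemma lift_x:
  assumes p: "p > 0"
    and h: "\<And>k. int p ^ k dvd 5*(s k)^2 - (m - 7*y0^2 - 70*z0^2)"
    and c: "\<And>k. int p ^ k dvd s (Suc k) - s k"
  shows "padic_rep p m"
proof (rule padic_from[OF p c, of "\<lambda>_. y0" "\<lambda>_. z0"])
  fix k
  have "ff (s k) y0 z0 - m = 5*(s k)^2 - (m - 7*y0^2 - 70*z0^2)" by (simp add: ff_def)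
  then show "int p ^ k dvd ff (s k) ((\<lambda>_. y0) k) ((\<lambda>_. z0) k) - m" using h[of k] by metis
qed simp_all

lemma lift_y:
  assumes p: "p > 0"
    and h: "\<And>k. int p ^ k dvd 7*(s k)^2 - (m - 5*x0^2 - 70*z0^2)"
    and c: "\<And>k. int p ^ k dvd s (Suc k) - s k"
  shows "padic_rep p m"
proof (rule padic_from[OF p _ c, where s="\<lambda>_. x0" and u="\<lambda>_. z0"])
  fix k
  have "ff x0 (s k) z0 - m = 7*(s k)^2 - (m - 5*x0^2 - 70*z0^2)" by (simp add: ff_def)
  then show "int p ^ k dvd ff ((\<lambda>_. x0) k) (s k) ((\<lambda>_. z0) k) - m" using h[of k] by metis
qed simp_all

lemma padic_generic:
  assumes p: "prime p" "p \<noteq> 2" "p \<noteq> 5" "p \<noteq> 7"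
  shows "padic_rep p m"
proof -
  define q where "q = int p"
  have qp: "prime q" using p by (simp add: q_def)
  have p0: "p > 0" using p prime_gt_0_nat by blast
  have "2 < p" using p(1,2) prime_ge_2_nat[of p] by linarith
  then have "odd p" using p(1) prime_odd_nat by blast
  then have oq: "odd q" unfolding q_def by simp
  have nd2: "\<not> q dvd 2"
  proof
    assume "q dvd 2"
    then have "q \<le> 2" by (simp add: zdvd_imp_le)
    moreover have "q > 1" using qp prime_gt_1_int by blast
    ultimately have "q = 2" by linarith
    then show False using oq by simp
  qed
  have n70: "\<not> q dvd 70" and n5: "\<not> q dvd 5" and n7: "\<not> q dvd 7"
  proof -
    have "(70::int) = 2 * 5 * 7" by simp
    have a: "\<not> q dvd 5"
    proof
      assume "q dvd 5" then have "p dvd 5" unfolding q_def by (metis int_dvd_int_iff of_nat_numeral)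
      moreover have "prime (5::nat)" by (simp add: prime_nat_iff' atLeastLessThan_nat_numeral)
      ultimately have "p = 5" using p(1) primes_dvd_imp_eq by blast
      then show False using p by simp
    qed
    have b: "\<not> q dvd 7"
    proof
      assume "q dvd 7" then have "p dvd 7" unfolding q_def by (metis int_dvd_int_iff of_nat_numeral)
      moreover have "prime (7::nat)" by (simp add: prime_nat_iff' atLeastLessThan_nat_numeral)
      ultimately have "p = 7" using p(1) primes_dvd_imp_eq by blast
      then show False using p by simp
    qed
    show "\<not> q dvd 5" "\<not> q dvd 7" using a b by auto
    show "\<not> q dvd 70"
    proof
      assume "q dvd 70"
      then have "q dvd 2 * (5 * 7)" by simp
      then have "q dvd 2 \<or> q dvd 5 * 7" using qp prime_dvd_mult_iff by blast
      then have "q dvd 2 \<or> q dvd 5 \<or> q dvd 7" using qp prime_dvd_mult_iff by blast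
      then show False using a b nd2 by blast
    qed
  qed
  define z0 :: int where "z0 = (if q dvd m then 1 else 0)"
  have nz: "\<not> q dvd m - 70*z0^2"
  proof (cases "q dvd m")
    case True
    have "\<not> q dvd m - 70"
    proof
      assume "q dvd m - 70"
      then have "q dvd m - (m - 70)" using True dvd_diff by blast
      then show False using n70 by simp
    qed
    then show ?thesis using True by (simp add: z0_def)
  next
    case False then show ?thesis by (simp add: z0_def)
  qed
  obtain x0 y0 where xy: "q dvd 5*x0^2 + 7*y0^2 - (m - 70*z0^2)"
    using two_squares_mod[OF qp oq n5 n7] by blast
  show ?thesis
  proof (cases "q dvd x0")
    case False
    have "q dvd 5*x0^2 - (m - 7*y0^2 - 70*z0^2)" using xy by (simp add: algebra_simps)
    from hensel_odd[OF qp nd2 n5 False this] obtain s where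
      s: "\<And>k. q ^ Suc k dvd 5 * (s k)^2 - (m - 7*y0^2 - 70*z0^2) \<and> q ^ Suc k dvd s (Suc k) - s k"
      by blast
    show ?thesis
    proof (rule lift_x[OF p0, of s m y0 z0])
      fix k
      show "int p ^ k dvd 5 * (s k)\<^sup>2 - (m - 7 * y0\<^sup>2 - 70 * z0\<^sup>2)"
        using dvd_from_higher[OF conjunct1[OF s[of k]], of k] by (simp add: q_def)
      show "int p ^ k dvd s (Suc k) - s k"
        using dvd_from_higher[OF conjunct2[OF s[of k]], of k] by (simp add: q_def)
    qed
  next
    case True
    have ny: "\<not> q dvd y0"
    proof
      assume "q dvd y0"
      then have "q dvd 5*x0^2 + 7*y0^2" using True by (simp add: power2_eq_square)
      then have "q dvd (5*x0^2 + 7*y0^2) - (5*x0^2 + 7*y0^2 - (m - 70*z0^2))" using xy by (rule dvd_diff)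
      then show False using nz by simp
    qed
    have "q dvd 7*y0^2 - (m - 5*x0^2 - 70*z0^2)" using xy by (simp add: algebra_simps)
    from hensel_odd[OF qp nd2 n7 ny this] obtain s where
      s: "\<And>k. q ^ Suc k dvd 7 * (s k)^2 - (m - 5*x0^2 - 70*z0^2) \<and> q ^ Suc k dvd s (Suc k) - s k"
      by blast
    show ?thesis
    proof (rule lift_y[OF p0, of s m x0 z0])
      fix k
      show "int p ^ k dvd 7 * (s k)\<^sup>2 - (m - 5 * x0\<^sup>2 - 70 * z0\<^sup>2)"
        using dvd_from_higher[OF conjunct1[OF s[of k]], of k] by (simp add: q_def)
      show "int p ^ k dvd s (Suc k) - s k"
        using dvd_from_higher[OF conjunct2[OF s[of k]], of k] by (simp add: q_def)
    qed
  qed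
qed



lemma prime5: "prime (5::int)"
proof -
  have "prime (5::nat)" by (simp add: prime_nat_iff' atLeastLessThan_nat_numeral)
  then have "prime (int 5)" by simp
  then show ?thesis by simp
qed

lemma prime7: "prime (7::int)"
proof -
  have "prime (7::nat)" by (simp add: prime_nat_iff' atLeastLessThan_nat_numeral)
  then have "prime (int 7)" by simp
  then show ?thesis by simp
qed

lemma padic_5:
  assumes "5 dvd 28 - m" shows "padic_rep 5 m"
proof -
  have h: "5 dvd 7 * 2^2 - m" using assms by simp
  from hensel_odd[OF prime5 _ _ _ h] obtain s where
    s: "\<And>k. 5 ^ Suc k dvd 7 * (s k)^2 - m \<and> 5 ^ Suc k dvd s (Suc k) - s k" by auto
  show ?thesis
  proof (rule lift_y[of 5 s m 0 0])
    fix k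
    show "int 5 ^ k dvd 7 * (s k)\<^sup>2 - (m - 5 * 0\<^sup>2 - 70 * 0\<^sup>2)"
      using dvd_from_higher[OF conjunct1[OF s[of k]], of k] by simp
    show "int 5 ^ k dvd s (Suc k) - s k"
      using dvd_from_higher[OF conjunct2[OF s[of k]], of k] by simp
  qed simp
qed

lemma padic_7:
  assumes "7 dvd 5*t^2 - m" "\<not> 7 dvd t" shows "padic_rep 7 m"
proof -
  from hensel_odd[OF prime7 _ _ assms(2) assms(1)] obtain s where
    s: "\<And>k. 7 ^ Suc k dvd 5 * (s k)^2 - m \<and> 7 ^ Suc k dvd s (Suc k) - s k" by auto
  show ?thesis
  proof (rule lift_x[of 7 s m 0 0])
    fix k
    show "int 7 ^ k dvd 5 * (s k)\<^sup>2 - (m - 7 * 0\<^sup>2 - 70 * 0\<^sup>2)"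
      using dvd_from_higher[OF conjunct1[OF s[of k]], of k] by simp
    show "int 7 ^ k dvd s (Suc k) - s k"
      using dvd_from_higher[OF conjunct2[OF s[of k]], of k] by simp
  qed simp
qed

lemma padic_2x:
  assumes "8 dvd 5 - (m - 7*y0^2 - 70*z0^2)" shows "padic_rep 2 m"
proof -
  from hensel_two[of 5, OF _ assms] obtain s where
    s: "\<And>k. 2 ^ (k+3) dvd 5 * (s k)^2 - (m - 7*y0^2 - 70*z0^2) \<and> 2 ^ (k+2) dvd s (Suc k) - s k" by auto
  show ?thesis
  proof (rule lift_x[of 2 s m y0 z0])
    fix k
    show "int 2 ^ k dvd 5 * (s k)\<^sup>2 - (m - 7 * y0\<^sup>2 - 70 * z0\<^sup>2)"
      using dvd_from_higher[OF conjunct1[OF s[of k]], of k] by simp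
    show "int 2 ^ k dvd s (Suc k) - s k"
      using dvd_from_higher[OF conjunct2[OF s[of k]], of k] by simp
  qed simp
qed

lemma padic_2z:
  assumes "16 dvd m - 6" shows "padic_rep 2 m"
proof -
  define b where "b = m div 2"
  have mb: "m = 2*b" using assms unfolding b_def by presburger
  have h: "8 dvd 35 - b" using assms unfolding b_def by presburger
  from hensel_two[of 35, OF _ h] obtain s where
    s: "\<And>k. 2 ^ (k+3) dvd 35 * (s k)^2 - b \<and> 2 ^ (k+2) dvd s (Suc k) - s k" by auto
  show ?thesis
  proof (rule padic_from[of 2 "\<lambda>_. 0" "\<lambda>_. 0" s])
    fix k
    show "int 2 ^ k dvd s (Suc k) - s k"
      using dvd_from_higher[OF conjunct2[OF s[of k]], of k] by simp
    have e: "ff 0 0 (s k) - m = 2 * (35 * (s k)^2 - b)" by (simp add: ff_def mb)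
    have "int 2 ^ k dvd 35 * (s k)^2 - b"
      using dvd_from_higher[OF conjunct1[OF s[of k]], of k] by simp
    then show "int 2 ^ k dvd ff ((\<lambda>_. 0) k) ((\<lambda>_. 0) k) (s k) - m" unfolding e by (rule dvd_mult)
  qed simp_all
qed

lemma padic_2e:
  assumes mm: "m = 16*m'" and h: "8 dvd 5 - (m' - 7*y0^2 - 70*z0^2)" shows "padic_rep 2 m"
proof -
  from hensel_two[of 5, OF _ h] obtain s where
    s: "\<And>k. 2 ^ (k+3) dvd 5 * (s k)^2 - (m' - 7*y0^2 - 70*z0^2) \<and> 2 ^ (k+2) dvd s (Suc k) - s k" by auto
  show ?thesis
  proof (rule padic_from[of 2 "\<lambda>k. 4 * s k" "\<lambda>_. 4*y0" "\<lambda>_. 4*z0"])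
    fix k
    have "int 2 ^ k dvd s (Suc k) - s k"
      using dvd_from_higher[OF conjunct2[OF s[of k]], of k] by simp
    then have "int 2 ^ k dvd 4 * (s (Suc k) - s k)" by (rule dvd_mult)
    then show "int 2 ^ k dvd 4 * s (Suc k) - 4 * s k" by (simp add: algebra_simps)
    have e: "ff (4 * s k) (4*y0) (4*z0) - m = 16 * (5 * (s k)^2 - (m' - 7*y0^2 - 70*z0^2))"
      by (simp add: ff_def mm power2_eq_square algebra_simps)
    have "int 2 ^ k dvd 5 * (s k)^2 - (m' - 7*y0^2 - 70*z0^2)"
      using dvd_from_higher[OF conjunct1[OF s[of k]], of k] by simp
    then show "int 2 ^ k dvd ff ((\<lambda>k. 4 * s k) k) ((\<lambda>_. 4*y0) k) ((\<lambda>_. 4*z0) k) - m"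
      unfolding e by (rule dvd_mult)
  qed simp_all
qed



lemma nat_mod_form: "n mod (k::nat) = r \<Longrightarrow> \<exists>j::int. int n = int k * j + int r"
proof -
  assume "n mod k = r"
  have "n = k * (n div k) + n mod k" by simp
  then have "int n = int k * int (n div k) + int (n mod k)" by (metis of_nat_add of_nat_mult)
  then show ?thesis using \<open>n mod k = r\<close> by blast
qed

lemma dvd_witness: "(x::int) = d * w \<Longrightarrow> d dvd x" by simp

theorem lemma4p1:
  fixes n :: nat
  shows "(n mod 4 = 1 \<or> n mod 4 = 2 \<or> n mod 8 = 4 \<longrightarrow>
            locally_represented (70 * int n - 2))
       \<and> (n mod 4 = 3 \<or> n mod 16 = 8 \<longrightarrow>
            locally_represented (70 * int n - 32))"
proof (intro conjI impI)
  assume H: "n mod 4 = 1 \<or> n mod 4 = 2 \<or> n mod 8 = 4"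
  have "n \<noteq> 0" using H by auto
  then have pos: "70 * int n - 2 > 0" by simp
  have "padic_rep p (70 * int n - 2)" if p: "prime p" for p
  proof -
    consider "p = 2" | "p = 5" | "p = 7" | "p \<noteq> 2 \<and> p \<noteq> 5 \<and> p \<noteq> 7" by blast
    then show ?thesis
    proof cases
      case 1
      from H consider "n mod 4 = 1" | "n mod 4 = 2" | "n mod 8 = 4" by blast
      then show ?thesis
      proof cases
        case 1
        then obtain j where nj: "int n = 4 * j + 1" using nat_mod_form[OF \<open>n mod _ = _\<close>] by auto
        have "8 dvd 5 - (70 * int n - 2 - 7*1^2 - 70*0^2)"
          by (rule dvd_witness[where w="-7-35*j"]) (simp add: nj algebra_simps)
        from padic_2x[OF this] show ?thesis using \<open>p = 2\<close> by simp
      next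
        case 2
        then obtain j where nj: "int n = 4 * j + 2" using nat_mod_form[OF \<open>n mod _ = _\<close>] by auto
        have "8 dvd 5 - (70 * int n - 2 - 7*1^2 - 70*1^2)"
          by (rule dvd_witness[where w="-7-35*j"]) (simp add: nj algebra_simps)
        from padic_2x[OF this] show ?thesis using \<open>p = 2\<close> by simp
      next
        case 3
        then obtain j where nj: "int n = 8 * j + 4" using nat_mod_form[OF \<open>n mod _ = _\<close>] by auto
        have "16 dvd (70 * int n - 2) - 6"
          by (rule dvd_witness[where w="35*j+17"]) (simp add: nj algebra_simps)
        from padic_2z[OF this] show ?thesis using \<open>p = 2\<close> by simp
      qed
    next
      case 2
      have "5 dvd 28 - (70 * int n - 2)"
        by (rule dvd_witness[where w="6 - 14 * int n"]) (simp add: algebra_simps)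
      from padic_5[OF this] show ?thesis using 2 by simp
    next
      case 3
      have "7 dvd 5*1^2 - (70 * int n - 2)"
        by (rule dvd_witness[where w="1 - 10 * int n"]) (simp add: algebra_simps)
      from padic_7[OF this] show ?thesis using 3 by simp
    next
      case 4
      then show ?thesis using padic_generic p by blast
    qed
  qed
  then show "locally_represented (70 * int n - 2)"
    unfolding locally_represented_def using real_rep[OF pos] by blast
next
  assume H: "n mod 4 = 3 \<or> n mod 16 = 8"
  have "n \<noteq> 0" using H by auto
  then have pos: "70 * int n - 32 > 0" by simp
  have "padic_rep p (70 * int n - 32)" if p: "prime p" for p
  proof -
    consider "p = 2" | "p = 5" | "p = 7" | "p \<noteq> 2 \<and> p \<noteq> 5 \<and> p \<noteq> 7" by blast
    then show ?thesis
    proof cases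
      case 1
      from H consider "n mod 4 = 3" | "n mod 16 = 8" by blast
      then show ?thesis
      proof cases
        case 1
        then obtain j where nj: "int n = 4 * j + 3" using nat_mod_form[OF \<open>n mod _ = _\<close>] by auto
        have "8 dvd 5 - (70 * int n - 32 - 7*1^2 - 70*1^2)"
          by (rule dvd_witness[where w="-12-35*j"]) (simp add: nj algebra_simps)
        from padic_2x[OF this] show ?thesis using \<open>p = 2\<close> by simp
      next
        case 2
        then obtain j where nj: "int n = 16 * j + 8" using nat_mod_form[OF \<open>n mod _ = _\<close>] by auto
        define m' where "m' = 70 * j + 33"
        have mm: "70 * int n - 32 = 16 * m'" unfolding m'_def by (simp add: nj algebra_simps)
        define i where "i = j div 4"
        have ji: "j = 4 * i + j mod 4" unfolding i_def by simp
        have "0 \<le> j mod 4" "j mod 4 < 4" by simp_all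
        then consider "j mod 4 = 0" | "j mod 4 = 1" | "j mod 4 = 2" | "j mod 4 = 3" by linarith
        then have "\<exists>y0 z0. 8 dvd 5 - (m' - 7*y0^2 - 70*z0^2)"
        proof cases
          case 1
          have "8 dvd 5 - (m' - 7*2^2 - 70*0^2)"
            by (rule dvd_witness[where w="-35*i"]) (simp add: m'_def ji[unfolded 1] algebra_simps)
          then show ?thesis by blast
        next
          case 2
          have "8 dvd 5 - (m' - 7*2^2 - 70*1^2)"
            by (rule dvd_witness[where w="-35*i"]) (simp add: m'_def ji[unfolded 2] algebra_simps)
          then show ?thesis by blast
        next
          case 3
          have "8 dvd 5 - (m' - 7*0^2 - 70*0^2)"
            by (rule dvd_witness[where w="-21-35*i"]) (simp add: m'_def ji[unfolded 3] algebra_simps)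
          then show ?thesis by blast
        next
          case 4
          have "8 dvd 5 - (m' - 7*0^2 - 70*1^2)"
            by (rule dvd_witness[where w="-21-35*i"]) (simp add: m'_def ji[unfolded 4] algebra_simps)
          then show ?thesis by blast
        qed
        then obtain y0 z0 where "8 dvd 5 - (m' - 7*y0^2 - 70*z0^2)" by blast
        from padic_2e[OF mm this] show ?thesis using \<open>p = 2\<close> by simp
      qed
    next
      case 2
      have "5 dvd 28 - (70 * int n - 32)"
        by (rule dvd_witness[where w="12 - 14 * int n"]) (simp add: algebra_simps)
      from padic_5[OF this] show ?thesis using 2 by simp
    next
      case 3
      have "7 dvd 5*3^2 - (70 * int n - 32)"
        by (rule dvd_witness[where w="11 - 10 * int n"]) (simp add: algebra_simps)
      from padic_7[OF this] show ?thesis using 3 by simp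
    next
      case 4
      then show ?thesis using padic_generic p by blast
    qed
  qed
  then show "locally_represented (70 * int n - 32)"
    unfolding locally_represented_def using real_rep[OF pos] by blast
qed

end
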